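(* Let $G=(U,V,E)$ be a bipartite graph and let $X \subseteq V$ be such that some minimum-cardinality vertex cover of $G$ contains $X$. Let $Y \subseteq V$. Then $G \setminus Y$ has a minimum-cardinality vertex cover containing $X \setminus Y$.
   Context: $G=(U,V,E)$ denotes a bipartite graph with vertex set $U\cup V$ and every edge having one end in $U$ and the other in $V$. $G\setminus Y$ denotes the graph obtained by deleting the vertices of $Y$. A vertex cover is a set of vertices incident to all edges. *)

theory Defs
  imports Main
begin

definition bipartite_graph :: "'a set \<Rightarrow> 'a set \<Rightarrow> ('a \<times> 'a) set \<Rightarrow> bool" where
  "bipartite_graph U V E \<longleftrightarrow> finite U \<and> finite V \<and> U \<inter> V = {} \<and> E \<subseteq> U \<times> V"

definition vertex_cover :: "'a set \<Rightarrow> 'a set \<Rightarrow> ('a \<times> 'a) set \<Rightarrow> 'a set \<Rightarrow> bool" where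
  "vertex_cover U V E C \<longleftrightarrow> C \<subseteq> U \<union> V \<and> (\<forall>(u,v)\<in>E. u \<in> C \<or> v \<in> C)"

definition min_vertex_cover :: "'a set \<Rightarrow> 'a set \<Rightarrow> ('a \<times> 'a) set \<Rightarrow> 'a set \<Rightarrow> bool" where
  "min_vertex_cover U V E C \<longleftrightarrow> vertex_cover U V E C \<and>
     (\<forall>C'. vertex_cover U V E C' \<longrightarrow> card C \<le> card C')"

text \<open>The edge set of G minus the vertices in Y (vertex sets become U - Y, V - Y).\<close>
definition del_edges :: "('a \<times> 'a) set \<Rightarrow> 'a set \<Rightarrow> ('a \<times> 'a) set" where
  "del_edges E Y = {(u,v) \<in> E. u \<notin> Y \<and> v \<notin> Y}"

end

theory Submission
  imports Defs
begin

theorem lemma5: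
  fixes U V X Y :: "'a set" and E :: "('a \<times> 'a) set"
  assumes "bipartite_graph U V E"
    and "X \<subseteq> V"
    and "\<exists>C. min_vertex_cover U V E C \<and> X \<subseteq> C"
    and "Y \<subseteq> V"
  shows "\<exists>C. min_vertex_cover (U - Y) (V - Y) (del_edges E Y) C \<and> X - Y \<subseteq> C"
proof -
  have bg: "finite U" "finite V" "U \<inter> V = {}" "E \<subseteq> U \<times> V"
    using assms(1) unfolding bipartite_graph_def by auto
  obtain C where C: "min_vertex_cover U V E C" "X \<subseteq> C" using assms(3) by blast
  have Ccov: "vertex_cover U V E C" using C(1) unfolding min_vertex_cover_def by blast
  have Cmin: "\<And>C'. vertex_cover U V E C' \<Longrightarrow> card C \<le> card C'"
    using C(1) unfolding min_vertex_cover_def by blast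
  let ?E = "del_edges E Y"
  have "vertex_cover (U - Y) (V - Y) ?E (U \<union> V - Y)"
    unfolding vertex_cover_def del_edges_def using bg(4) by auto
  then obtain C' where C': "vertex_cover (U - Y) (V - Y) ?E C'"
    "\<And>B. vertex_cover (U - Y) (V - Y) ?E B \<Longrightarrow> card C' \<le> card B"
    using ex_has_least_nat[of "vertex_cover (U - Y) (V - Y) ?E" _ card] by blast
  define D where "D = (C \<inter> C' \<inter> U) \<union> ((C \<union> C') \<inter> V - Y)"
  define F where "F = ((C \<union> C') \<inter> U) \<union> (C \<inter> C' \<inter> V) \<union> (C \<inter> Y)"
  have Csub: "C \<subseteq> U \<union> V" using Ccov unfolding vertex_cover_def by blast
  have C'sub: "C' \<subseteq> U \<union> V - Y" using C'(1) unfolding vertex_cover_def by blast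
  have fin: "finite C" "finite C'" using Csub C'sub bg(1,2) finite_subset by blast+
  have Dcov: "vertex_cover (U - Y) (V - Y) ?E D"
    unfolding vertex_cover_def D_def
  proof (intro conjI ballI)
    show "C \<inter> C' \<inter> U \<union> ((C \<union> C') \<inter> V - Y) \<subseteq> U - Y \<union> (V - Y)" using C'sub by auto
  next
    fix e assume e: "e \<in> ?E"
    obtain u v where uv: "e = (u,v)" by force
    have "(u,v) \<in> E" "u \<notin> Y" "v \<notin> Y" using e uv unfolding del_edges_def by auto
    moreover have "u \<in> U" "v \<in> V" using calculation(1) bg(4) by auto
    moreover have "u \<in> C \<or> v \<in> C" using Ccov calculation(1) unfolding vertex_cover_def by blast
    moreover have "u \<in> C' \<or> v \<in> C'" using C'(1) e uv unfolding vertex_cover_def by blast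
    ultimately show "case e of (u, v) \<Rightarrow> u \<in> C \<inter> C' \<inter> U \<union> ((C \<union> C') \<inter> V - Y) \<or>
                      v \<in> C \<inter> C' \<inter> U \<union> ((C \<union> C') \<inter> V - Y)" using uv by auto
  qed
  have Fcov: "vertex_cover U V E F"
    unfolding vertex_cover_def F_def
  proof (intro conjI ballI)
    show "(C \<union> C') \<inter> U \<union> C \<inter> C' \<inter> V \<union> C \<inter> Y \<subseteq> U \<union> V" using Csub by auto
  next
    fix e assume e: "e \<in> E"
    obtain u v where uv: "e = (u,v)" by force
    have "u \<in> U" "v \<in> V" using e uv bg(4) by auto
    moreover have "u \<notin> Y" using calculation(1) assms(4) bg(3) by blast
    moreover have "u \<in> C \<or> v \<in> C" using Ccov e uv unfolding vertex_cover_def by blast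
    moreover have "v \<notin> Y \<Longrightarrow> u \<in> C' \<or> v \<in> C'" using C'(1) e uv \<open>u \<notin> Y\<close>
      unfolding vertex_cover_def del_edges_def by blast
    ultimately show "case e of (u, v) \<Rightarrow> u \<in> (C \<union> C') \<inter> U \<union> C \<inter> C' \<inter> V \<union> C \<inter> Y \<or>
                      v \<in> (C \<union> C') \<inter> U \<union> C \<inter> C' \<inter> V \<union> C \<inter> Y" using uv by auto
  qed
  have un: "D \<union> F = C \<union> C'" using Csub C'sub unfolding D_def F_def by blast
  have it: "D \<inter> F = C \<inter> C'" using Csub C'sub bg(3) unfolding D_def F_def by blast
  have finDF: "finite D" "finite F" using fin unfolding D_def F_def by auto
  have "card D + card F = card C + card C'"
    using card_Un_Int[OF finDF] card_Un_Int[OF fin] un it by simp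
  moreover have "card C \<le> card F" using Cmin Fcov by blast
  ultimately have "card D \<le> card C'" by linarith
  hence "min_vertex_cover (U - Y) (V - Y) ?E D"
    unfolding min_vertex_cover_def using Dcov C'(2) by fastforce
  moreover have "X - Y \<subseteq> D" using C(2) assms(2) unfolding D_def by blast
  ultimately show ?thesis by blast
qed

end
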